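(* Let $m$ be a positive integer, let $\mathcal{N}_r$ be the gadget of size $m$, and let $\pi$ be an $\mathcal{H}^{(\ast)}$-partition of $\mathcal{N}_r$. Then for every $P\in\pi$, the Hamiltonian path of the induced subgraph $\mathcal{N}_r[P]$ has either all its arcs in $\swarrow_r$ or all its arcs in $\searrow_r$.
   Context: The gadget $\mathcal{N}_r=\langle\mathcal{V}_r,\mathcal{E}_r\rangle$ of size $m$ has vertex set $\mathcal{V}_r=\{r_{i,j}:0\le i,j\le m\}$ and arc set $\mathcal{E}_r=\swarrow_r\cup\searrow_r$, where $\swarrow_r=\{\langle r_{i,j},r_{i,j+1}\rangle:0\le i\le m,\ 0\le j<m\}$ and $\searrow_r=\{\langle r_{i,j},r_{i+1,j}\rangle:0\le i<m,\ 0\le j\le m\}$; it is a DAG. For a digraph $G$ and a subset $V_1$ of its vertices, $G[V_1]$ is the induced subgraph. A partition $\pi$ of the vertex set of a DAG $G$ is an $\mathcal{H}^{(\ast)}$-partition if every induced subgraph $G[P]$, $P\in\pi$, has a directed Hamiltonian path (which in a DAG is unique) and the quotient digraph $G/\pi$ (vertex set $\pi$, arc $\langle P,Q\rangle$ for $P\ne Q$ whenever some arc of $G$ goes from $P$ to $Q$) is acyclic. *)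

theory Defs
  imports Main "HOL-Library.Disjoint_Sets"
begin

definition gadget_V :: "nat \<Rightarrow> (nat \<times> nat) set" where
  "gadget_V m = {(i, j). i \<le> m \<and> j \<le> m}"

definition gadget_SW :: "nat \<Rightarrow> ((nat \<times> nat) \<times> (nat \<times> nat)) set" where
  "gadget_SW m = {((i, j), (i, j + 1)) | i j. i \<le> m \<and> j < m}"

definition gadget_SE :: "nat \<Rightarrow> ((nat \<times> nat) \<times> (nat \<times> nat)) set" where
  "gadget_SE m = {((i, j), (i + 1, j)) | i j. i < m \<and> j \<le> m}"

definition gadget_E :: "nat \<Rightarrow> ((nat \<times> nat) \<times> (nat \<times> nat)) set" where
  "gadget_E m = gadget_SW m \<union> gadget_SE m"

definition path_arcs :: "'a list \<Rightarrow> ('a \<times> 'a) set" where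
  "path_arcs xs = set (zip xs (tl xs))"

definition is_ham_path :: "('a \<times> 'a) set \<Rightarrow> 'a set \<Rightarrow> 'a list \<Rightarrow> bool" where
  "is_ham_path E P xs \<longleftrightarrow> distinct xs \<and> set xs = P \<and> path_arcs xs \<subseteq> E"

definition quotient_arcs :: "('a \<times> 'a) set \<Rightarrow> 'a set set \<Rightarrow> ('a set \<times> 'a set) set" where
  "quotient_arcs E \<pi> = {(P, Q). P \<in> \<pi> \<and> Q \<in> \<pi> \<and> P \<noteq> Q \<and> (\<exists>u\<in>P. \<exists>v\<in>Q. (u, v) \<in> E)}"

definition H_star_partition :: "'a set \<Rightarrow> ('a \<times> 'a) set \<Rightarrow> 'a set set \<Rightarrow> bool" where
  "H_star_partition V E \<pi> \<longleftrightarrow>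
     partition_on V \<pi> \<and>
     (\<forall>P\<in>\<pi>. \<exists>xs. is_ham_path E P xs) \<and>
     acyclic (quotient_arcs E \<pi>)"

end

theory Submission
  imports Defs
begin

lemma pa_Cons2: "path_arcs (a#b#ys) = insert (a,b) (path_arcs (b#ys))"
  by (simp add: path_arcs_def)

lemma pa_single: "path_arcs [a] = {}"
  by (simp add: path_arcs_def)

lemma lvl:
  assumes "path_arcs xs \<subseteq> gadget_E m" "k < length xs"
  shows "fst (xs!k) + snd (xs!k) = fst (hd xs) + snd (hd xs) + k"
  using assms
proof (induction xs arbitrary: k)
  case Nil then show ?case by simp
next
  case (Cons a xs)
  show ?case
  proof (cases xs)
    case Nil then show ?thesis using Cons.prems by simp
  next
    case (Cons b ys)
    have ab: "(a,b) \<in> gadget_E m" and r: "path_arcs xs \<subseteq> gadget_E m"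
      using Cons.prems(1) by (auto simp: pa_Cons2 \<open>xs = b#ys\<close>)
    have s: "fst b + snd b = fst a + snd a + 1"
      using ab by (auto simp: gadget_E_def gadget_SW_def gadget_SE_def)
    show ?thesis
    proof (cases k)
      case 0 then show ?thesis by simp
    next
      case (Suc k')
      have "k' < length xs" using Cons.prems(2) Suc by simp
      from Cons.IH[OF r this] show ?thesis using Suc s \<open>xs = b#ys\<close> by simp
    qed
  qed
qed

lemma lvl_inj:
  assumes "path_arcs xs \<subseteq> gadget_E m" "x \<in> set xs" "y \<in> set xs"
    "fst x + snd x = fst y + snd y"
  shows "x = y"
proof -
  obtain k where k: "k < length xs" "x = xs!k" using assms(2) by (auto simp: in_set_conv_nth)
  obtain l where l: "l < length xs" "y = xs!l" using assms(3) by (auto simp: in_set_conv_nth)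
  have "k = l" using lvl[OF assms(1) k(1)] lvl[OF assms(1) l(1)] assms(4) k l by simp
  then show ?thesis using k l by simp
qed

lemma switch:
  assumes "path_arcs xs \<subseteq> gadget_E m" "\<not> path_arcs xs \<subseteq> gadget_SW m"
    "\<not> path_arcs xs \<subseteq> gadget_SE m"
  shows "\<exists>ys u v w zs. xs = ys @ u # v # w # zs \<and>
     (((u,v) \<in> gadget_SW m \<and> (v,w) \<in> gadget_SE m) \<or> ((u,v) \<in> gadget_SE m \<and> (v,w) \<in> gadget_SW m))"
  using assms
proof (induction xs)
  case Nil then show ?case by (simp add: path_arcs_def)
next
  case (Cons a xs)
  show ?case
  proof (cases xs)
    case Nil then show ?thesis using Cons.prems by (simp add: pa_single)
  next
    case (Cons b ys)
    have ab: "(a,b) \<in> gadget_E m" and r: "path_arcs xs \<subseteq> gadget_E m"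
      using Cons.prems(1) by (auto simp: pa_Cons2 \<open>xs = b#ys\<close>)
    show ?thesis
    proof (cases "path_arcs xs \<subseteq> gadget_SW m \<or> path_arcs xs \<subseteq> gadget_SE m")
      case False
      then obtain ys' u v w zs where "xs = ys' @ u # v # w # zs" and
        "(((u,v) \<in> gadget_SW m \<and> (v,w) \<in> gadget_SE m) \<or> ((u,v) \<in> gadget_SE m \<and> (v,w) \<in> gadget_SW m))"
        using Cons.IH[OF r] by blast
      then show ?thesis by (metis append_Cons)
    next
      case True
      then have ys: "ys \<noteq> []" using Cons.prems \<open>xs = b#ys\<close> ab
        by (auto simp: pa_Cons2 pa_single gadget_E_def)
      then obtain c zs where c: "ys = c # zs" by (cases ys) auto
      have bc: "(b,c) \<in> path_arcs xs" using \<open>xs = b#ys\<close> c by (simp add: pa_Cons2)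
      have "((a,b) \<in> gadget_SW m \<and> (b,c) \<in> gadget_SE m) \<or> ((a,b) \<in> gadget_SE m \<and> (b,c) \<in> gadget_SW m)"
        using True Cons.prems(2,3) ab bc \<open>xs = b#ys\<close>
        by (auto simp: pa_Cons2 gadget_E_def)
      then show ?thesis using \<open>xs = b#ys\<close> c by (metis append_Nil)
    qed
  qed
qed

theorem lemma5p2:
  fixes m :: nat and \<pi> :: "(nat \<times> nat) set set"
  assumes "0 < m"
    and "H_star_partition (gadget_V m) (gadget_E m) \<pi>"
  shows "\<forall>P\<in>\<pi>. \<forall>xs. is_ham_path (gadget_E m) P xs \<longrightarrow>
           path_arcs xs \<subseteq> gadget_SW m \<or> path_arcs xs \<subseteq> gadget_SE m"
proof (intro ballI allI impI)
  fix P xs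
  assume P: "P \<in> \<pi>" and h: "is_ham_path (gadget_E m) P xs"
  have pe: "path_arcs xs \<subseteq> gadget_E m" and sP: "set xs = P" using h by (auto simp: is_ham_path_def)
  have part: "partition_on (gadget_V m) \<pi>" and ac: "acyclic (quotient_arcs (gadget_E m) \<pi>)"
    using assms(2) by (auto simp: H_star_partition_def)
  show "path_arcs xs \<subseteq> gadget_SW m \<or> path_arcs xs \<subseteq> gadget_SE m"
  proof (rule ccontr)
    assume "\<not> ?thesis"
    then obtain ys u v w zs where xs: "xs = ys @ u # v # w # zs" and
      sw: "((u,v) \<in> gadget_SW m \<and> (v,w) \<in> gadget_SE m) \<or> ((u,v) \<in> gadget_SE m \<and> (v,w) \<in> gadget_SW m)"
      using switch[OF pe] by blast
    obtain x where x: "(u,x) \<in> gadget_E m" "(x,w) \<in> gadget_E m" "x \<noteq> v"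
      "fst x + snd x = fst v + snd v"
      using sw by (auto simp: gadget_E_def gadget_SW_def gadget_SE_def)
    have "x \<notin> P"
    proof
      assume "x \<in> P"
      moreover have "v \<in> set xs" using xs by simp
      ultimately have "x = v" using lvl_inj[OF pe, of x v] sP x(4) by blast
      then show False using x(3) by simp
    qed
    have "x \<in> gadget_V m" using x(1) by (auto simp: gadget_E_def gadget_SW_def gadget_SE_def gadget_V_def)
    then obtain Q where Q: "Q \<in> \<pi>" "x \<in> Q" using part by (auto simp: partition_on_def)
    have "Q \<noteq> P" using Q \<open>x \<notin> P\<close> by auto
    have uP: "u \<in> P" "w \<in> P" using sP xs by auto
    have "(P,Q) \<in> quotient_arcs (gadget_E m) \<pi>" "(Q,P) \<in> quotient_arcs (gadget_E m) \<pi>"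
      using P Q \<open>Q \<noteq> P\<close> uP x(1,2) unfolding quotient_arcs_def by blast+
    then have "(P,P) \<in> (quotient_arcs (gadget_E m) \<pi>)\<^sup>+" by (meson trancl.r_into_trancl trancl_into_trancl)
    then show False using ac by (simp add: acyclic_def)
  qed
qed

end
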